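(* Let $r\ge 3$. There exists an uncountable set of $r$-tuples $(\alpha_1,\dots,\alpha_r)\in\mathbb{R}^r$, each such that $1,\alpha_1,\dots,\alpha_r$ are linearly independent over $\mathbb{Q}$, with the following property: there is a three-dimensional sublattice $\Lambda(\alpha_1,\dots,\alpha_r)$ of $\mathbb{Z}^{r+1}$ such that the best approximations $m_\nu$ (in the sense of linear form) for $(\alpha_1,\dots,\alpha_r)$ lie in $\Lambda(\alpha_1,\dots,\alpha_r)$ for all sufficiently large $\nu$.
   Context: For real $\alpha_1,\dots,\alpha_r$ and $m=(m_0,\dots,m_r)\in\mathbb{Z}^{r+1}\setminus\{0\}$ put $\zeta(m)=|m_0+m_1\alpha_1+\dots+m_r\alpha_r|$ and $M=\max_{0\le j\le r}|m_j|$. A point $m\in\mathbb{Z}^{r+1}\setminus\{0\}$ is a best approximation (in the sense of linear form) if $\zeta(m)=\min\{\zeta(n): n\in\mathbb{Z}^{r+1}\setminus\{0\},\ \max_j|n_j|\le M\}$. The best approximations are ordered as $m_1,m_2,\dots$ so that $\zeta(m_1)>\zeta(m_2)>\dots$ and $M_1<M_2<\dots$, where $M_\nu=\max_j|m_{j,\nu}|$. *)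

theory Defs
  imports Complex_Main "HOL-Library.Countable_Set"
begin

text \<open>Integer vectors in Z^(r+1) are modelled as functions nat => int supported on {0..r};
  tuples (alpha_1,...,alpha_r) as functions nat => real supported on {1..r}.\<close>

definition intvec :: "nat \<Rightarrow> (nat \<Rightarrow> int) set" where
  "intvec r = {m. \<forall>j>r. m j = 0}"

definition realtuple :: "nat \<Rightarrow> (nat \<Rightarrow> real) set" where
  "realtuple r = {\<alpha>. \<forall>i. (i = 0 \<or> i > r) \<longrightarrow> \<alpha> i = 0}"

definition zeta :: "nat \<Rightarrow> (nat \<Rightarrow> real) \<Rightarrow> (nat \<Rightarrow> int) \<Rightarrow> real" where
  "zeta r \<alpha> m = \<bar>real_of_int (m 0) + (\<Sum>j=1..r. real_of_int (m j) * \<alpha> j)\<bar>"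

definition maxnorm :: "nat \<Rightarrow> (nat \<Rightarrow> int) \<Rightarrow> int" where
  "maxnorm r m = Max ((\<lambda>j. \<bar>m j\<bar>) ` {0..r})"

definition best_approx :: "nat \<Rightarrow> (nat \<Rightarrow> real) \<Rightarrow> (nat \<Rightarrow> int) \<Rightarrow> bool" where
  "best_approx r \<alpha> m \<longleftrightarrow> m \<in> intvec r \<and> m \<noteq> (\<lambda>_. 0) \<and>
     (\<forall>n \<in> intvec r. n \<noteq> (\<lambda>_. 0) \<and> maxnorm r n \<le> maxnorm r m \<longrightarrow> zeta r \<alpha> m \<le> zeta r \<alpha> n)"

definition Q_lin_indep :: "nat \<Rightarrow> (nat \<Rightarrow> real) \<Rightarrow> bool" where
  "Q_lin_indep r \<alpha> \<longleftrightarrow> (\<forall>q :: nat \<Rightarrow> real. (\<forall>i\<le>r. q i \<in> \<rat>) \<and>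
      q 0 + (\<Sum>i=1..r. q i * \<alpha> i) = 0 \<longrightarrow> (\<forall>i\<le>r. q i = 0))"

definition lattice_span :: "(nat \<Rightarrow> nat \<Rightarrow> int) \<Rightarrow> (nat \<Rightarrow> int) set" where
  "lattice_span b = {m. \<exists>c :: nat \<Rightarrow> int. m = (\<lambda>j. \<Sum>k<3. c k * b k j)}"

text \<open>b 0, b 1, b 2 are linearly independent vectors of Z^(r+1), so that
  lattice_span b is a three-dimensional sublattice of Z^(r+1).\<close>
definition sublattice3_basis :: "nat \<Rightarrow> (nat \<Rightarrow> nat \<Rightarrow> int) \<Rightarrow> bool" where
  "sublattice3_basis r b \<longleftrightarrow> (\<forall>k<3. b k \<in> intvec r) \<and>
     (\<forall>c :: nat \<Rightarrow> int. (\<forall>j. (\<Sum>k<3. c k * b k j) = 0) \<longrightarrow> (\<forall>k<3. c k = 0))"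

end

theory Submission
  imports Defs
begin

fun Lv :: "nat \<Rightarrow> nat \<Rightarrow> nat" where
  "Lv r 0 = 2 ^ (8*r)"
| "Lv r (Suc l) = Lv r l ^ (8*r)"

fun Kv :: "nat \<Rightarrow> nat \<Rightarrow> nat" where
  "Kv r 0 = 16"
| "Kv r (Suc l) = 8 * Lv r l"

definition dig :: "nat \<Rightarrow> nat set \<Rightarrow> nat \<Rightarrow> nat \<Rightarrow> nat" where
  "dig r S j l = (if j = 1 then (if odd l then (if l div 2 \<in> S then 2 else 1) else 0)
     else if j = 2 then (if even l then 1 else 0) else Kv r l ^ (j - 2))"

definition al :: "nat \<Rightarrow> nat set \<Rightarrow> nat \<Rightarrow> real" where
  "al r S j = (if 1 \<le> j \<and> j \<le> r then (\<Sum>l. real (dig r S j l) / real (Lv r l)) else 0)"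

lemma Lv_ge: assumes "0 < r" shows "2 ^ (8*r) \<le> Lv r l"
proof (induction l)
  case 0 then show ?case by simp
next
  case (Suc l)
  have "1 \<le> Lv r l" using Suc by (metis le_trans one_le_numeral one_le_power)
  then have "Lv r l \<le> Lv r l ^ (8*r)" using assms by (intro self_le_power) auto
  then show ?case using Suc by simp
qed

lemma two_le_pow: assumes "0 < r" shows "(2::nat) \<le> 2 ^ (8*r)"
  using assms by (metis One_nat_def Suc_leI mult_pos_pos power_increasing power_one_right
      zero_less_numeral one_le_numeral)

lemma Lv_ge2: assumes "0 < r" shows "2 \<le> Lv r l"
  using Lv_ge[OF assms, of l] two_le_pow[OF assms] by linarith

lemma Lv_Suc_ge: assumes "0 < r" shows "2 * Lv r l \<le> Lv r (Suc l)"
proof -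
  have a: "2 \<le> Lv r l" by (rule Lv_ge2[OF assms])
  have "2 * Lv r l \<le> Lv r l * Lv r l" using a by simp
  also have "\<dots> = Lv r l ^ 2" by (simp add: power2_eq_square)
  also have "\<dots> \<le> Lv r l ^ (8*r)" using a assms by (intro power_increasing) auto
  finally show ?thesis by simp
qed

lemma Lv_mono: assumes "0 < r" "l \<le> t" shows "Lv r l \<le> Lv r t"
  using assms(2)
proof (induction t)
  case 0 then show ?case by simp
next
  case (Suc t)
  show ?case
  proof (cases "l = Suc t")
    case False
    then have "Lv r l \<le> Lv r t" using Suc by simp
    then show ?thesis using Lv_Suc_ge[OF assms(1), of t] by simp
  qed simp
qed

lemma Lv_dvd: assumes "0 < r" "l \<le> t" shows "Lv r l dvd Lv r t"
  using assms(2)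
proof (induction t)
  case 0 then show ?case by simp
next
  case (Suc t)
  show ?case
  proof (cases "l = Suc t")
    case False
    then have "Lv r l dvd Lv r t" using Suc by simp
    moreover have "Lv r t dvd Lv r (Suc t)" using assms(1) by simp
    ultimately show ?thesis by (rule dvd_trans)
  qed simp
qed

lemma Lv_gt: assumes "0 < r" shows "l < Lv r l"
proof (induction l)
  case 0 then show ?case using Lv_ge2[OF assms, of 0] by simp
next
  case (Suc l) then show ?case using Lv_Suc_ge[OF assms, of l] Lv_ge2[OF assms, of l] by simp
qed

lemma Lv_pos: "0 < r \<Longrightarrow> 0 < Lv r l" using Lv_ge2[of r l] by simp

lemma Kv_ge: assumes "0 < r" shows "2 \<le> Kv r l"
proof (cases l)
  case (Suc k)
  have "2 \<le> Lv r k" by (rule Lv_ge2[OF assms])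
  then show ?thesis using Suc by simp
qed simp

lemma tail_bound:
  fixes a g :: "nat \<Rightarrow> real"
  assumes a0: "\<And>l. 0 \<le> a l" and ah: "\<And>l. a (Suc l) \<le> a l / 2" and c0: "0 \<le> c"
    and g: "\<And>l. \<bar>g l\<bar> \<le> c * a l"
  shows "summable g" "\<bar>\<Sum>k. g (k + T)\<bar> \<le> 2 * c * a T"
proof -
  have sa: "summable a"
    by (rule summable_ratio_test[of "1/2" 0]) (use a0 ah in auto)
  show sg: "summable g"
    by (rule summable_comparison_test'[of "\<lambda>l. c * a l" 0]) (use sa g in auto)
  have pw: "a (k+T) \<le> a T * (1/2)^k" for k
  proof (induction k)
    case 0 then show ?case by simp
  next
    case (Suc k)
    have "a (Suc k + T) \<le> a (k+T) / 2" using ah[of "k+T"] by simp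
    also have "\<dots> \<le> a T * (1/2)^k / 2" using Suc by simp
    finally show ?case by simp
  qed
  have gs: "(\<lambda>k. (1/2::real)^k) sums 2" using geometric_sums[of "1/2::real"] by simp
  have s1: "summable (\<lambda>k. \<bar>g (k + T)\<bar>)"
  proof -
    have "summable (\<lambda>l. \<bar>g l\<bar>)"
      by (rule summable_comparison_test'[of "\<lambda>l. c * a l" 0]) (use sa g in auto)
    then show ?thesis by (subst summable_iff_shift)
  qed
  have s2: "summable (\<lambda>k. c * a T * (1/2::real)^k)"
    using gs by (intro summable_mult) (simp add: sums_summable)
  have "\<bar>\<Sum>k. g (k + T)\<bar> \<le> (\<Sum>k. \<bar>g (k + T)\<bar>)"
    using summable_norm[of "\<lambda>k. g (k+T)"] s1 by simp
  also have "\<dots> \<le> (\<Sum>k. c * a T * (1/2::real)^k)"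
  proof (rule suminf_le[OF _ s1 s2])
    fix k
    have "\<bar>g (k + T)\<bar> \<le> c * a (k+T)" by (rule g)
    also have "\<dots> \<le> c * (a T * (1/2)^k)" using pw c0 by (intro mult_left_mono) auto
    finally show "\<bar>g (k + T)\<bar> \<le> c * a T * (1/2::real)^k" by simp
  qed
  also have "\<dots> = c * a T * 2" using gs by (simp add: suminf_mult sums_unique[symmetric])
  finally show "\<bar>\<Sum>k. g (k + T)\<bar> \<le> 2 * c * a T" by simp
qed

lemma nat_const: assumes "0 < r" shows "2*r*8^r + 4 < (2::nat)^(8*r)"
proof -
  have e: "(8::nat)^r = 2^(3*r)" by (simp add: power_mult)
  have "r < 2^r" by (rule less_exp)
  then have "2*r*8^r < 2*2^r*2^(3*r)" using e by simp
  also have "\<dots> = 2^(4*r+1)" by (simp add: power_add[symmetric] mult.commute)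
  finally have a: "2*r*8^r < (2::nat)^(4*r+1)" .
  have "(4::nat) = 2^2" by simp
  also have "\<dots> \<le> 2^(4*r+1)" using assms by (intro power_increasing) auto
  finally have b: "4 \<le> (2::nat)^(4*r+1)" .
  have "(2::nat)^(4*r+1) + 2^(4*r+1) = 2^(4*r+2)" by simp
  also have "\<dots> \<le> 2^(8*r)" using assms by (intro power_increasing) auto
  finally show ?thesis using a b by linarith
qed

lemma pow_pred: fixes x :: real assumes r: "0 < r" shows "x^(8*r) = x^(8*r-1) * x"
proof -
  obtain k where k: "8*r = Suc k" using r by (metis gr0_implies_Suc mult_pos_pos zero_less_numeral)
  then have "8*r - 1 = k" by simp
  then show ?thesis using k by (simp only: power_Suc2)
qed

lemma one_le_pow8: "(1::real) \<le> 2^(8*r)" by simp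

lemma num_base:
  fixes z :: real
  assumes r: "0 < r" and z: "2^(8*r) \<le> z"
  shows "2*real r*8^r*z^(r+1) + 4*z < z^(8*r-1)"
proof -
  have c0: "real (2*r*8^r + 4) < real ((2::nat)^(8*r))"
    using nat_const[OF r] by (simp only: of_nat_less_iff)
  have c: "2*real r*8^r + 4 < z" using z c0 by simp
  have z1: "1 \<le> z" using z one_le_pow8[of r] by linarith
  have zr: "z \<le> z^(r+1)" using z1 by (intro self_le_power) auto
  have "2*real r*8^r*z^(r+1) + 4*z \<le> (2*real r*8^r+4) * z^(r+1)"
    using zr by (simp add: algebra_simps)
  also have "\<dots> < z * z^(r+1)"
  proof -
    have "0 < z^(r+1)" using z1 by simp
    from mult_strict_right_mono[OF c this] show ?thesis .
  qed
  also have "\<dots> = z^(r+2)" by simp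
  also have "\<dots> \<le> z^(8*r-1)" using z1 r by (intro power_increasing) auto
  finally show ?thesis .
qed

lemma num1:
  fixes x lt :: real
  assumes r: "0 < r" and x: "2^(8*r) \<le> x" and lt: "lt \<le> x"
  shows "4*lt/x^(8*r) + 2*real r*x*((8*x)^r / x^(8*r)) < 1/x"
proof -
  have x1: "1 \<le> x" using x one_le_pow8[of r] by linarith
  have xp: "x^(8*r) = x^(8*r-1) * x" using pow_pred[OF r] .
  have "4*lt + 2*real r*x*(8*x)^r \<le> 4*x + 2*r*8^r*x^(r+1)"
    using lt by (simp add: power_mult_distrib algebra_simps)
  also have "\<dots> < x^(8*r-1)" using num_base[OF r x] by simp
  finally have *: "4*lt + 2*real r*x*(8*x)^r < x^(8*r-1)" .
  have "4*lt/x^(8*r) + 2*real r*x*((8*x)^r / x^(8*r)) = (4*lt + 2*real r*x*(8*x)^r) / x^(8*r)"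
    by (simp add: add_divide_distrib)
  also have "\<dots> < x^(8*r-1) / x^(8*r)"
    using * x1 by (intro divide_strict_right_mono) auto
  also have "\<dots> = 1/x" using xp x1 by simp
  finally show ?thesis .
qed

lemma num2:
  fixes x y :: real
  assumes r: "0 < r" and y: "2^(8*r) \<le> y" and x: "x \<le> y" "0 \<le> x"
  shows "2*real r*x*((8*y)^r / y^(8*r)) < 1/y"
proof -
  have y1: "1 \<le> y" using y one_le_pow8[of r] by linarith
  have yp: "y^(8*r) = y^(8*r-1) * y" using pow_pred[OF r] .
  have "2*real r*x*(8*y)^r \<le> 2*real r*y*(8*y)^r" using x by (intro mult_right_mono mult_left_mono) auto
  also have "\<dots> = 2*r*8^r*y^(r+1)" by (simp add: power_mult_distrib algebra_simps)
  also have "\<dots> < y^(8*r-1)" using num_base[OF r y] y1 by simp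
  finally have *: "2*real r*x*(8*y)^r < y^(8*r-1)" .
  have "2*real r*x*((8*y)^r / y^(8*r)) = (2*real r*x*(8*y)^r) / y^(8*r)" by simp
  also have "\<dots> < y^(8*r-1) / y^(8*r)"
    using * y1 by (intro divide_strict_right_mono) auto
  also have "\<dots> = 1/y" using yp y1 by simp
  finally show ?thesis .
qed

definition Wv :: "nat \<Rightarrow> nat \<Rightarrow> real" where
  "Wv r l = real (Kv r l) ^ r / real (Lv r l)"

lemma Wv_nonneg: "0 \<le> Wv r l" by (simp add: Wv_def)

lemma Wv_Suc: assumes r: "0 < r" shows "Wv r (Suc l) \<le> Wv r l / 2"
proof -
  define z where "z = real (Lv r l)"
  have z: "2^(8*r) \<le> z" unfolding z_def using Lv_ge[OF r, of l]
    by (metis of_nat_le_iff of_nat_numeral of_nat_power)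
  have z1: "1 \<le> z" using z one_le_pow8[of r] by linarith
  have K1: "1 \<le> real (Kv r l) ^ r" using Kv_ge[OF r, of l] by simp
  have zp: "z^(8*r) = z^(8*r-1) * z" using pow_pred[OF r] .
  have "2 * 8^r * z^r \<le> 2*r*8^r*z^(r+1)"
  proof -
    have "z^r \<le> z^(r+1)" using z1 by (intro power_increasing) auto
    moreover have "1 \<le> real r" using r by simp
    ultimately have "1 * z^r \<le> real r * z^(r+1)" using z1 by (intro mult_mono) auto
    then show ?thesis by simp
  qed
  also have "\<dots> < z^(8*r-1)" using num_base[OF r z] z1 by simp
  finally have a: "2 * 8^r * z^r \<le> z^(8*r-1)" by simp
  have "Wv r (Suc l) = (8*z)^r / z^(8*r)" unfolding Wv_def z_def by simp
  also have "\<dots> = (2 * 8^r * z^r) / (z^(8*r-1)) / (2*z)"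
    using zp z1 by (simp add: power_mult_distrib field_simps)
  also have "\<dots> \<le> 1 / (2*z)"
    using a z1 by (intro divide_right_mono) auto
  also have "\<dots> \<le> Wv r l / 2"
    unfolding Wv_def z_def[symmetric] using K1 z1 by (simp add: field_simps)
  finally show ?thesis .
qed

lemma baseK:
  fixes c :: "nat \<Rightarrow> int" and K :: int
  assumes "\<And>i. i < n \<Longrightarrow> \<bar>c i\<bar> < K" "(\<Sum>i<n. c i * K^i) = 0"
  shows "\<forall>i<n. c i = 0"
  using assms
proof (induction n arbitrary: c)
  case 0 then show ?case by simp
next
  case (Suc n)
  have e: "(\<Sum>i<Suc n. c i * K^i) = c 0 + K * (\<Sum>i<n. c (Suc i) * K^i)"
    by (subst sum.lessThan_Suc_shift) (simp add: sum_distrib_left algebra_simps)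
  have K: "0 < K" using Suc.prems(1)[of 0] by simp
  have "K dvd c 0" using Suc.prems(2) e by (metis add.commute add_eq_0_iff dvd_minus_iff dvd_triv_left)
  have c0: "c 0 = 0"
  proof (rule ccontr)
    assume "c 0 \<noteq> 0"
    then have "\<bar>K\<bar> \<le> \<bar>c 0\<bar>" using dvd_imp_le_int \<open>K dvd c 0\<close> by blast
    then show False using K Suc.prems(1)[of 0] by simp
  qed
  then have "(\<Sum>i<n. c (Suc i) * K^i) = 0" using Suc.prems(2) e K by simp
  then have "\<forall>i<n. c (Suc i) = 0"
  proof (intro Suc.IH)
    fix i assume "i < n"
    then show "\<bar>c (Suc i)\<bar> < K" using Suc.prems(1)[of "Suc i"] by simp
  qed
  then show ?case using c0
  proof (intro allI impI)
    fix i assume "i < Suc n"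
    then show "c i = 0" using c0 \<open>\<forall>i<n. c (Suc i) = 0\<close> by (cases i) auto
  qed
qed

definition uu :: "nat \<Rightarrow> nat set \<Rightarrow> (nat \<Rightarrow> int) \<Rightarrow> nat \<Rightarrow> int" where
  "uu r S m l = (\<Sum>j=1..r. m j * int (dig r S j l))"

definition Lf :: "nat \<Rightarrow> nat set \<Rightarrow> (nat \<Rightarrow> int) \<Rightarrow> real" where
  "Lf r S m = real_of_int (m 0) + (\<Sum>j=1..r. real_of_int (m j) * al r S j)"

lemma dig_le: assumes r: "0 < r" and j: "j \<le> r" shows "real (dig r S j l) \<le> real (Kv r l) ^ r"
proof -
  have K2: "2 \<le> Kv r l" by (rule Kv_ge[OF r])
  have Kr: "Kv r l \<le> Kv r l ^ r" using K2 r by (intro self_le_power) auto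
  have "dig r S j l \<le> Kv r l ^ r"
  proof (cases "j = 1 \<or> j = 2")
    case True then show ?thesis using K2 Kr unfolding dig_def by auto
  next
    case False
    then have "dig r S j l = Kv r l ^ (j - 2)" unfolding dig_def by auto
    also have "\<dots> \<le> Kv r l ^ r" using K2 j by (intro power_increasing) auto
    finally show ?thesis .
  qed
  then show ?thesis by (metis of_nat_le_iff of_nat_power)
qed

lemma dig_sums: assumes r: "0 < r" and j: "j \<in> {1..r}"
  shows "(\<lambda>l. real (dig r S j l) / real (Lv r l)) sums al r S j"
proof -
  have "summable (\<lambda>l. real (dig r S j l) / real (Lv r l))"
  proof (rule tail_bound(1)[of "Wv r" 1])
    fix l
    show "\<bar>real (dig r S j l) / real (Lv r l)\<bar> \<le> 1 * Wv r l"
      unfolding Wv_def using dig_le[OF r, of j S l] j Lv_pos[OF r, of l]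
      by (simp add: divide_right_mono)
  next
    show "\<And>l. 0 \<le> Wv r l" by (rule Wv_nonneg)
    show "\<And>l. Wv r (Suc l) \<le> Wv r l / 2" by (rule Wv_Suc[OF r])
  qed simp
  then show ?thesis using j unfolding al_def by (simp add: summable_sums)
qed

lemma Lf_sums: assumes r: "0 < r"
  shows "(\<lambda>l. real_of_int (uu r S m l) / real (Lv r l)) sums (Lf r S m - m 0)"
proof -
  have "(\<lambda>l. \<Sum>j=1..r. real_of_int (m j) * (real (dig r S j l) / real (Lv r l)))
      sums (\<Sum>j=1..r. real_of_int (m j) * al r S j)"
    by (rule sums_sum) (intro sums_mult dig_sums[OF r])
  moreover have "(\<lambda>l. \<Sum>j=1..r. real_of_int (m j) * (real (dig r S j l) / real (Lv r l)))
      = (\<lambda>l. real_of_int (uu r S m l) / real (Lv r l))"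
    unfolding uu_def by (simp add: sum_divide_distrib)
  ultimately show ?thesis unfolding Lf_def by simp
qed

lemma uu_bound: assumes r: "0 < r" and X: "\<And>j. j \<in> {1..r} \<Longrightarrow> \<bar>real_of_int (m j)\<bar> \<le> X"
  shows "\<bar>real_of_int (uu r S m l)\<bar> \<le> real r * X * real (Kv r l) ^ r"
proof -
  have "\<bar>real_of_int (uu r S m l)\<bar> = \<bar>\<Sum>j=1..r. real_of_int (m j) * real (dig r S j l)\<bar>"
    unfolding uu_def by simp
  also have "\<dots> \<le> (\<Sum>j=1..r. \<bar>real_of_int (m j) * real (dig r S j l)\<bar>)" by (rule sum_abs)
  also have "\<dots> \<le> (\<Sum>j=1..r. X * real (Kv r l) ^ r)"
  proof (rule sum_mono)
    fix j assume j: "j \<in> {1..r}"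
    have "\<bar>real_of_int (m j) * real (dig r S j l)\<bar> = \<bar>real_of_int (m j)\<bar> * real (dig r S j l)"
      by (simp add: abs_mult)
    also have "\<dots> \<le> X * real (Kv r l) ^ r"
      using X[OF j] dig_le[OF r, of j S l] j by (intro mult_mono) auto
    finally show "\<bar>real_of_int (m j) * real (dig r S j l)\<bar> \<le> X * real (Kv r l) ^ r" .
  qed
  also have "\<dots> = real r * X * real (Kv r l) ^ r" by simp
  finally show ?thesis .
qed

lemma KL:
  assumes r: "0 < r" and X: "\<And>j. j \<in> {1..r} \<Longrightarrow> \<bar>real_of_int (m j)\<bar> \<le> X" and X0: "0 \<le> X"
  shows "\<exists>A::int. \<exists>R. Lf r S m = A / real (Lv r (t+1)) + real_of_int (uu r S m (t+2)) / real (Lv r (t+2)) + R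
      \<and> \<bar>R\<bar> \<le> 2 * (real r * X) * Wv r (t+3)
      \<and> \<bar>real_of_int (uu r S m (t+2)) / real (Lv r (t+2)) + R\<bar> \<le> 2 * (real r * X) * Wv r (t+2)"
proof -
  define g where "g l = real_of_int (uu r S m l) / real (Lv r l)" for l
  have gb: "\<bar>g l\<bar> \<le> (real r * X) * Wv r l" for l
    unfolding g_def Wv_def using uu_bound[OF r X, where S=S and l=l] Lv_pos[OF r, of l]
    by (simp add: divide_right_mono)
  have tb: "summable g" "\<And>T. \<bar>\<Sum>k. g (k + T)\<bar> \<le> 2 * (real r * X) * Wv r T"
    using tail_bound[of "Wv r" "real r * X" g] Wv_nonneg Wv_Suc[OF r] X0 gb by auto
  have sg: "suminf g = Lf r S m - m 0" using Lf_sums[OF r, where S=S and m=m] unfolding g_def[abs_def]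
    by (simp add: sums_unique[symmetric])
  define R where "R = (\<Sum>k. g (k + (t+3)))"
  have sh: "summable (\<lambda>k. g (k + (t+2)))" using tb(1) by (subst summable_iff_shift)
  have h: "(\<Sum>k. g (k + (t+2))) = g (t+2) + R"
  proof -
    have "(\<Sum>k. g (Suc k + (t+2))) = (\<Sum>k. g (k + (t+2))) - g (0 + (t+2))"
      by (rule suminf_split_head[OF sh])
    moreover have "(\<lambda>k. g (Suc k + (t+2))) = (\<lambda>k. g (k + (t+3)))" by (simp add: numeral_3_eq_3 numeral_2_eq_2)
    ultimately show ?thesis unfolding R_def by simp
  qed
  have sp: "suminf g = (\<Sum>k. g (k + (t+2))) + (\<Sum>l<t+2. g l)"
    by (rule suminf_split_initial_segment[OF tb(1)])
  define A' where "A' = (\<Sum>l<t+2. uu r S m l * int (Lv r (t+1) div Lv r l))"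
  have fin: "(\<Sum>l<t+2. g l) = real_of_int A' / real (Lv r (t+1))"
  proof -
    have "g l = real_of_int (uu r S m l * int (Lv r (t+1) div Lv r l)) / real (Lv r (t+1))"
      if "l < t+2" for l
    proof -
      have d: "Lv r l dvd Lv r (t+1)" using that by (intro Lv_dvd[OF r]) auto
      have "real (Lv r (t+1) div Lv r l) = real (Lv r (t+1)) / real (Lv r l)"
        using d by (simp add: real_of_nat_div)
      then show ?thesis unfolding g_def using Lv_pos[OF r, of l] Lv_pos[OF r, of "t+1"] by simp
    qed
    then have "(\<Sum>l<t+2. g l) = (\<Sum>l<t+2. real_of_int (uu r S m l * int (Lv r (t+1) div Lv r l)) / real (Lv r (t+1)))"
      by (intro sum.cong) auto
    also have "\<dots> = real_of_int A' / real (Lv r (t+1))"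
      by (simp only: A'_def of_int_sum sum_divide_distrib)
    finally show ?thesis .
  qed
  define A where "A = m 0 * int (Lv r (t+1)) + A'"
  have xq: "0 < real (Lv r (t+1))" using Lv_pos[OF r] by simp
  have Aq: "real_of_int A / real (Lv r (t+1)) = real_of_int (m 0) + real_of_int A' / real (Lv r (t+1))"
    using xq unfolding A_def by (simp add: field_simps)
  have "Lf r S m = real_of_int A / real (Lv r (t+1)) + g (t+2) + R"
    using sg sp h fin Aq by linarith
  moreover have "\<bar>R\<bar> \<le> 2 * (real r * X) * Wv r (t+3)" unfolding R_def by (rule tb(2))
  moreover have "\<bar>g (t+2) + R\<bar> \<le> 2 * (real r * X) * Wv r (t+2)" using tb(2)[of "t+2"] h by simp
  ultimately show ?thesis unfolding g_def by blast
qed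

lemma Lv_t2: "Lv r (t+2) = Lv r (t+1) ^ (8*r)"
  using Lv.simps(2)[of r "t+1"] by (simp add: numeral_2_eq_2)
lemma Lv_t3: "Lv r (t+3) = Lv r (t+2) ^ (8*r)"
  using Lv.simps(2)[of r "t+2"] by (simp add: numeral_3_eq_3 numeral_2_eq_2)
lemma Kv_t2: "Kv r (t+2) = 8 * Lv r (t+1)"
  using Kv.simps(2)[of r "t+1"] by (simp add: numeral_2_eq_2)
lemma Kv_t3: "Kv r (t+3) = 8 * Lv r (t+2)"
  using Kv.simps(2)[of r "t+2"] by (simp add: numeral_3_eq_3 numeral_2_eq_2)

lemma sum_split12: fixes r :: nat assumes "2 \<le> r"
  shows "(\<Sum>j=1..r. f j) = f 1 + f 2 + (\<Sum>j=3..r. (f j :: int))"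
proof -
  have e: "{1..r} = insert 1 (insert 2 {3..r})" using assms by auto
  show ?thesis unfolding e by simp
qed

lemma sum_shift3: fixes r :: nat shows "(\<Sum>j=3..r. (f j :: int)) = (\<Sum>i<r-2. f (i+3))"
  by (rule sum.reindex_bij_witness[where i="\<lambda>i. i+3" and j="\<lambda>j. j - 3"]) auto

declare Lv.simps[simp del] Kv.simps[simp del]

lemma rev_tri: "\<bar>a\<bar> - \<bar>b\<bar> \<le> \<bar>a + (b::real)\<bar>"
  using abs_triangle_ineq2[of a "-b"] by simp

lemma KL_cases:
  assumes r: "0 < r" and X: "\<And>j. j \<in> {1..r} \<Longrightarrow> \<bar>real_of_int (m j)\<bar> \<le> X" and X0: "0 \<le> X"
  shows "\<bar>Lf r S m\<bar> \<ge> 1 / real (Lv r (t+1)) - 2 * (real r * X) * Wv r (t+2)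
    \<or> \<bar>Lf r S m\<bar> \<ge> \<bar>real_of_int (uu r S m (t+2))\<bar> / real (Lv r (t+2)) - 2 * (real r * X) * Wv r (t+3)"
proof -
  obtain A :: int and R where e: "Lf r S m = A / real (Lv r (t+1)) + real_of_int (uu r S m (t+2)) / real (Lv r (t+2)) + R"
    and b1: "\<bar>R\<bar> \<le> 2 * (real r * X) * Wv r (t+3)"
    and b2: "\<bar>real_of_int (uu r S m (t+2)) / real (Lv r (t+2)) + R\<bar> \<le> 2 * (real r * X) * Wv r (t+2)"
    using KL[where m=m and X=X and S=S and t=t, OF r X X0] by blast
  have xp: "0 < real (Lv r (t+1))" using Lv_pos[OF r] by simp
  have yp: "0 < real (Lv r (t+2))" using Lv_pos[OF r] by simp
  show ?thesis
  proof (cases "A = 0")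
    case True
    then have "Lf r S m = real_of_int (uu r S m (t+2)) / real (Lv r (t+2)) + R" using e by simp
    moreover have "\<bar>real_of_int (uu r S m (t+2)) / real (Lv r (t+2))\<bar> = \<bar>real_of_int (uu r S m (t+2))\<bar> / real (Lv r (t+2))"
      using yp by (simp only: abs_divide abs_of_pos[OF yp])
    ultimately have "\<bar>Lf r S m\<bar> \<ge> \<bar>real_of_int (uu r S m (t+2))\<bar> / real (Lv r (t+2)) - \<bar>R\<bar>"
      using rev_tri[of "real_of_int (uu r S m (t+2)) / real (Lv r (t+2))" R] by simp
    then show ?thesis using b1 by linarith
  next
    case False
    then have "1 \<le> \<bar>real_of_int A\<bar>" by linarith
    then have "1 / real (Lv r (t+1)) \<le> \<bar>real_of_int A\<bar> / real (Lv r (t+1))"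
      using xp by (intro divide_right_mono) auto
    also have "\<dots> = \<bar>real_of_int A / real (Lv r (t+1))\<bar>" by (simp only: abs_divide abs_of_pos[OF xp])
    finally have "1 / real (Lv r (t+1)) \<le> \<bar>real_of_int A / real (Lv r (t+1))\<bar>" .
    then have "\<bar>Lf r S m\<bar> \<ge> 1 / real (Lv r (t+1)) - \<bar>real_of_int (uu r S m (t+2)) / real (Lv r (t+2)) + R\<bar>"
      using e rev_tri[of "real_of_int A / real (Lv r (t+1))" "real_of_int (uu r S m (t+2)) / real (Lv r (t+2)) + R"]
      by (simp add: add.assoc)
    then show ?thesis using b2 by linarith
  qed
qed

lemma u_big:
  assumes r: "3 \<le> r" and X: "\<And>j. j \<in> {1..r} \<Longrightarrow> \<bar>m j\<bar> \<le> int (Lv r (t+1))"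
    and nz: "\<exists>j\<in>{3..r}. m j \<noteq> 0"
  shows "5 * int (Lv r (t+1)) \<le> \<bar>uu r S m (t+2)\<bar>"
proof -
  define xi where "xi = int (Lv r (t+1))"
  define K where "K = int (Kv r (t+2))"
  have K: "K = 8 * xi" unfolding K_def xi_def Kv_t2 by simp
  have xi0: "0 < xi" unfolding xi_def using Lv_pos[of r] r by simp
  have d3: "int (dig r S j (t+2)) = K ^ (j-2)" if "3 \<le> j" for j
    using that unfolding dig_def K_def by auto
  have "uu r S m (t+2) = m 1 * int (dig r S 1 (t+2)) + m 2 * int (dig r S 2 (t+2))
      + (\<Sum>j=3..r. m j * int (dig r S j (t+2)))"
    unfolding uu_def using r by (subst sum_split12) auto
  also have "(\<Sum>j=3..r. m j * int (dig r S j (t+2))) = (\<Sum>j=3..r. m j * K ^ (j-2))"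
    using d3 by (intro sum.cong) auto
  also have "\<dots> = (\<Sum>i<r-2. m (i+3) * K ^ (i+1))" by (subst sum_shift3) simp
  also have "\<dots> = K * (\<Sum>i<r-2. m (i+3) * K ^ i)" by (simp add: sum_distrib_left algebra_simps)
  finally have ue: "uu r S m (t+2) = m 1 * int (dig r S 1 (t+2)) + m 2 * int (dig r S 2 (t+2))
      + K * (\<Sum>i<r-2. m (i+3) * K ^ i)" .
  define Z where "Z = (\<Sum>i<r-2. m (i+3) * K ^ i)"
  have "Z \<noteq> 0"
  proof
    assume "Z = 0"
    have "\<forall>i<r-2. m (i+3) = 0"
    proof (rule baseK[of "r-2" "\<lambda>i. m (i+3)" K])
      fix i assume "i < r - 2"
      then have "\<bar>m (i+3)\<bar> \<le> xi" using X[of "i+3"] unfolding xi_def by auto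
      then show "\<bar>m (i+3)\<bar> < K" using K xi0 by simp
    qed (use \<open>Z = 0\<close> Z_def in simp)
    moreover obtain j where j: "j \<in> {3..r}" "m j \<noteq> 0" using nz by blast
    moreover have "j - 3 < r - 2" "j - 3 + 3 = j" using j(1) by auto
    ultimately show False by metis
  qed
  then have "K \<le> \<bar>K * Z\<bar>" using K xi0 by (simp add: abs_mult)
  have d1: "int (dig r S 1 (t+2)) \<le> 2" "int (dig r S 2 (t+2)) \<le> 1" unfolding dig_def by auto
  have m1: "\<bar>m 1\<bar> \<le> xi" "\<bar>m 2\<bar> \<le> xi" using X[of 1] X[of 2] r unfolding xi_def by auto
  have "\<bar>m 1 * int (dig r S 1 (t+2))\<bar> \<le> 2 * xi"
  proof -
    have "\<bar>m 1\<bar> * int (dig r S 1 (t+2)) \<le> xi * 2" using m1 d1 by (intro mult_mono) auto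
    then show ?thesis by (simp add: abs_mult)
  qed
  moreover have "\<bar>m 2 * int (dig r S 2 (t+2))\<bar> \<le> xi"
  proof -
    have "\<bar>m 2\<bar> * int (dig r S 2 (t+2)) \<le> xi * 1" using m1 d1 by (intro mult_mono) auto
    then show ?thesis by (simp add: abs_mult)
  qed
  ultimately show ?thesis using ue \<open>K \<le> \<bar>K * Z\<bar>\<close> K unfolding Z_def xi_def by linarith
qed

lemma setup_facts:
  assumes r: "0 < r"
  shows "real (Lv r (t+2)) = real (Lv r (t+1)) ^ (8*r)"
    "real (Lv r (t+3)) = real (Lv r (t+2)) ^ (8*r)"
    "Wv r (t+2) = (8 * real (Lv r (t+1)))^r / real (Lv r (t+1)) ^ (8*r)"
    "Wv r (t+3) = (8 * real (Lv r (t+2)))^r / real (Lv r (t+2)) ^ (8*r)"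
    "2^(8*r) \<le> real (Lv r l)"
    "real (Lv r t) \<le> real (Lv r (t+1))"
    "real (Lv r (t+1)) \<le> real (Lv r (t+2))"
proof -
  show "real (Lv r (t+2)) = real (Lv r (t+1)) ^ (8*r)" unfolding Lv_t2 by simp
  show "real (Lv r (t+3)) = real (Lv r (t+2)) ^ (8*r)" unfolding Lv_t3 by simp
  show "Wv r (t+2) = (8 * real (Lv r (t+1)))^r / real (Lv r (t+1)) ^ (8*r)"
    unfolding Wv_def Kv_t2 Lv_t2 by simp
  show "Wv r (t+3) = (8 * real (Lv r (t+2)))^r / real (Lv r (t+2)) ^ (8*r)"
    unfolding Wv_def Kv_t3 Lv_t3 by simp
  have "(2::nat)^(8*r) \<le> Lv r l" by (rule Lv_ge[OF r])
  then show "2^(8*r) \<le> real (Lv r l)" by (metis of_nat_le_iff of_nat_numeral of_nat_power)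
  show "real (Lv r t) \<le> real (Lv r (t+1))" using Lv_mono[OF r, of t "t+1"] by simp
  show "real (Lv r (t+1)) \<le> real (Lv r (t+2))" using Lv_mono[OF r, of "t+1" "t+2"] by simp
qed

lemma KL_off:
  assumes r: "3 \<le> r" and X: "\<And>j. j \<in> {1..r} \<Longrightarrow> \<bar>m j\<bar> \<le> int (Lv r (t+1))"
    and nz: "\<exists>j\<in>{3..r}. m j \<noteq> 0"
  shows "4 * real (Lv r t) / real (Lv r (t+2)) < \<bar>Lf r S m\<bar>"
proof -
  have r0: "0 < r" using r by simp
  define x where "x = real (Lv r (t+1))"
  define y where "y = real (Lv r (t+2))"
  define lt where "lt = real (Lv r t)"
  note sf = setup_facts[OF r0]
  have Xr: "\<bar>real_of_int (m j)\<bar> \<le> x" if "j \<in> {1..r}" for j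
    using X[OF that] unfolding x_def by (metis of_int_abs of_int_le_iff of_int_of_nat_eq)
  have x: "2^(8*r) \<le> x" unfolding x_def by (rule sf(5))
  have y: "2^(8*r) \<le> y" unfolding y_def by (rule sf(5))
  have x1: "1 \<le> x" using x one_le_pow8[of r] by linarith
  have ye: "y = x^(8*r)" unfolding x_def y_def by (rule sf(1))
  have ltx: "lt \<le> x" unfolding lt_def x_def by (rule sf(6))
  have xy: "x \<le> y" unfolding x_def y_def by (rule sf(7))
  have yp: "0 < y" using xy x1 by simp
  have W2: "Wv r (t+2) = (8*x)^r / x^(8*r)" unfolding x_def by (rule sf(3))
  have W3: "Wv r (t+3) = (8*y)^r / y^(8*r)" unfolding y_def by (rule sf(4))
  have four: "4 * lt / y \<le> 4 * x / y" using ltx yp by (intro divide_right_mono) auto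
  from KL_cases[where m=m and X=x and S=S and t=t, OF r0 Xr] x1
  have "\<bar>Lf r S m\<bar> \<ge> 1 / x - 2 * (real r * x) * Wv r (t+2)
    \<or> \<bar>Lf r S m\<bar> \<ge> \<bar>real_of_int (uu r S m (t+2))\<bar> / y - 2 * (real r * x) * Wv r (t+3)"
    unfolding x_def y_def by auto
  then show ?thesis
  proof
    assume a: "\<bar>Lf r S m\<bar> \<ge> 1 / x - 2 * (real r * x) * Wv r (t+2)"
    have "4*lt/x^(8*r) + 2*real r*x*((8*x)^r / x^(8*r)) < 1/x" by (rule num1[OF r0 x ltx])
    moreover have "4*lt/x^(8*r) + 2*real r*x*((8*x)^r / x^(8*r)) = 4*lt/y + 2*(real r*x)*Wv r (t+2)"
      unfolding W2 ye by (simp only: mult.assoc)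
    ultimately have "4*lt/y + 2*(real r*x)*Wv r (t+2) < 1/x" by simp
    then have "4*lt/y < \<bar>Lf r S m\<bar>" using a by linarith
    then show ?thesis unfolding lt_def y_def .
  next
    assume a: "\<bar>Lf r S m\<bar> \<ge> \<bar>real_of_int (uu r S m (t+2))\<bar> / y - 2 * (real r * x) * Wv r (t+3)"
    have "5 * int (Lv r (t+1)) \<le> \<bar>uu r S m (t+2)\<bar>" by (rule u_big[OF r X nz])
    then have "real_of_int (5 * int (Lv r (t+1))) \<le> real_of_int \<bar>uu r S m (t+2)\<bar>"
      by (simp only: of_int_le_iff)
    then have "5 * x \<le> \<bar>real_of_int (uu r S m (t+2))\<bar>" unfolding x_def by simp
    then have b: "5 * x / y \<le> \<bar>real_of_int (uu r S m (t+2))\<bar> / y" using yp by (intro divide_right_mono) auto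
    have c: "2*real r*x*((8*y)^r / y^(8*r)) < 1/y" using num2[OF r0 y xy] x1 by simp
    have d: "1 / y \<le> x / y" using x1 yp by (intro divide_right_mono) auto
    have e: "5 * x / y - x / y = 4 * x / y" by (simp add: field_simps)
    have "2*real r*x*((8*y)^r / y^(8*r)) = 2*(real r*x)*Wv r (t+3)"
      unfolding W3 by (simp only: mult.assoc)
    then have c': "2*(real r*x)*Wv r (t+3) < 1/y" using c by simp
    have "4*lt/y < \<bar>Lf r S m\<bar>" using a b c' d e four by linarith
    then show ?thesis unfolding lt_def y_def .
  qed
qed

lemma int_abs_ge1: "(a::int) \<noteq> 0 \<Longrightarrow> 1 \<le> \<bar>a\<bar>" by arith

lemma KL_on:
  assumes r: "3 \<le> r" and X: "\<And>j. j \<in> {1..r} \<Longrightarrow> \<bar>m j\<bar> \<le> int (Lv r (t+1))"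
    and z: "\<And>j. j \<in> {3..r} \<Longrightarrow> m j = 0" and i: "m (if even t then 2 else 1) \<noteq> 0"
  shows "Lf r S m \<noteq> 0"
proof -
  have r0: "0 < r" using r by simp
  define x where "x = real (Lv r (t+1))"
  define y where "y = real (Lv r (t+2))"
  define lt where "lt = real (Lv r t)"
  note sf = setup_facts[OF r0]
  have Xr: "\<bar>real_of_int (m j)\<bar> \<le> x" if "j \<in> {1..r}" for j
    using X[OF that] unfolding x_def by (metis of_int_abs of_int_le_iff of_int_of_nat_eq)
  have x: "2^(8*r) \<le> x" unfolding x_def by (rule sf(5))
  have y: "2^(8*r) \<le> y" unfolding y_def by (rule sf(5))
  have x1: "1 \<le> x" using x one_le_pow8[of r] by linarith
  have ye: "y = x^(8*r)" unfolding x_def y_def by (rule sf(1))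
  have ltx: "lt \<le> x" unfolding lt_def x_def by (rule sf(6))
  have xy: "x \<le> y" unfolding x_def y_def by (rule sf(7))
  have yp: "0 < y" using xy x1 by simp
  have lt0: "0 \<le> lt" unfolding lt_def by simp
  have W2: "Wv r (t+2) = (8*x)^r / x^(8*r)" unfolding x_def by (rule sf(3))
  have W3: "Wv r (t+3) = (8*y)^r / y^(8*r)" unfolding y_def by (rule sf(4))
  have ue: "uu r S m (t+2) = m 1 * int (dig r S 1 (t+2)) + m 2 * int (dig r S 2 (t+2))"
  proof -
    have "uu r S m (t+2) = m 1 * int (dig r S 1 (t+2)) + m 2 * int (dig r S 2 (t+2))
      + (\<Sum>j=3..r. m j * int (dig r S j (t+2)))"
      unfolding uu_def using r by (subst sum_split12) auto
    moreover have "(\<Sum>j=3..r. m j * int (dig r S j (t+2))) = 0" using z by simp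
    ultimately show ?thesis by simp
  qed
  have u1: "1 \<le> \<bar>uu r S m (t+2)\<bar>"
  proof (cases "even t")
    case True
    then have "dig r S 1 (t+2) = 0" "dig r S 2 (t+2) = 1" unfolding dig_def by auto
    then have "uu r S m (t+2) \<noteq> 0" using ue i True by simp
    then show ?thesis by (rule int_abs_ge1)
  next
    case False
    then have d: "dig r S 2 (t+2) = 0" "1 \<le> dig r S 1 (t+2)" unfolding dig_def by auto
    have "m 1 \<noteq> 0" using i False by simp
    then have "m 1 * int (dig r S 1 (t+2)) \<noteq> 0" using d by simp
    then have "uu r S m (t+2) \<noteq> 0" using ue d by simp
    then show ?thesis by (rule int_abs_ge1)
  qed
  then have u1r: "1 \<le> \<bar>real_of_int (uu r S m (t+2))\<bar>"
    by (metis of_int_abs of_int_le_iff of_int_1)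
  from KL_cases[where m=m and X=x and S=S and t=t, OF r0 Xr] x1
  have "\<bar>Lf r S m\<bar> \<ge> 1 / x - 2 * (real r * x) * Wv r (t+2)
    \<or> \<bar>Lf r S m\<bar> \<ge> \<bar>real_of_int (uu r S m (t+2))\<bar> / y - 2 * (real r * x) * Wv r (t+3)"
    unfolding x_def y_def by auto
  then have "0 < \<bar>Lf r S m\<bar>"
  proof
    assume a: "\<bar>Lf r S m\<bar> \<ge> 1 / x - 2 * (real r * x) * Wv r (t+2)"
    have "4*lt/x^(8*r) + 2*real r*x*((8*x)^r / x^(8*r)) < 1/x" by (rule num1[OF r0 x ltx])
    moreover have "4*lt/x^(8*r) + 2*real r*x*((8*x)^r / x^(8*r)) = 4*lt/y + 2*(real r*x)*Wv r (t+2)"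
      unfolding W2 ye by (simp only: mult.assoc)
    ultimately have "4*lt/y + 2*(real r*x)*Wv r (t+2) < 1/x" by simp
    moreover have "0 \<le> 4*lt/y" using lt0 yp by simp
    ultimately show ?thesis using a by linarith
  next
    assume a: "\<bar>Lf r S m\<bar> \<ge> \<bar>real_of_int (uu r S m (t+2))\<bar> / y - 2 * (real r * x) * Wv r (t+3)"
    have b: "1 / y \<le> \<bar>real_of_int (uu r S m (t+2))\<bar> / y" using yp u1r by (intro divide_right_mono) auto
    have c: "2*real r*x*((8*y)^r / y^(8*r)) < 1/y" using num2[OF r0 y xy] x1 by simp
    have "2*real r*x*((8*y)^r / y^(8*r)) = 2*(real r*x)*Wv r (t+3)"
      unfolding W3 by (simp only: mult.assoc)
    then have c': "2*(real r*x)*Wv r (t+3) < 1/y" using c by simp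
    show ?thesis using a b c' by linarith
  qed
  then show ?thesis by simp
qed

lemma Lv_Suc_ge4: assumes r: "0 < r" shows "4 * Lv r l \<le> Lv r (Suc l)"
proof -
  have a: "4 \<le> Lv r l"
  proof -
    have "(4::nat) = 2^2" by simp
    also have "\<dots> \<le> 2^(8*r)" using r by (intro power_increasing) auto
    also have "\<dots> \<le> Lv r l" by (rule Lv_ge[OF r])
    finally show ?thesis .
  qed
  have "4 * Lv r l \<le> Lv r l * Lv r l" using a by simp
  also have "\<dots> = Lv r l ^ 2" by (simp add: power2_eq_square)
  also have "\<dots> \<le> Lv r l ^ (8*r)" using a r by (intro power_increasing) auto
  finally show ?thesis by (simp add: Lv.simps)
qed

lemma inv_tail: assumes r: "0 < r"
  shows "0 \<le> 1 / real (Lv r l)" "1 / real (Lv r (Suc l)) \<le> (1 / real (Lv r l)) / 2"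
proof -
  show "0 \<le> 1 / real (Lv r l)" by simp
  have p: "0 < real (Lv r l)" using Lv_pos[OF r] by simp
  have "2 * real (Lv r l) \<le> real (Lv r (Suc l))" using Lv_Suc_ge[OF r, of l] by linarith
  then show "1 / real (Lv r (Suc l)) \<le> (1 / real (Lv r l)) / 2"
    using p by (simp add: field_simps)
qed

lemma lam_vec:
  assumes r: "3 \<le> r"
  shows "\<exists>lam. lam \<in> intvec r \<and> lam \<noteq> (\<lambda>_. 0) \<and> maxnorm r lam \<le> int (Lv r t)
    \<and> zeta r (al r S) lam \<le> 4 * real (Lv r t) / real (Lv r (t+2))"
proof -
  have r0: "0 < r" using r by simp
  define i :: nat where "i = (if even t then 2 else 1)"
  have i12: "i = 1 \<or> i = 2" unfolding i_def by auto
  have ir: "i \<in> {1..r}" using i12 r by auto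
  define h where "h l = real (dig r S i l) / real (Lv r l)" for l
  have h0: "0 \<le> h l" for l unfolding h_def by simp
  have hb: "\<bar>h l\<bar> \<le> 2 * (1 / real (Lv r l))" for l
  proof -
    have "dig r S i l \<le> 2" using i12 unfolding dig_def by auto
    then have "real (dig r S i l) \<le> 2" by simp
    then show ?thesis unfolding h_def using Lv_pos[OF r0, of l] by (simp add: divide_right_mono)
  qed
  have tb: "summable h" "\<And>T. \<bar>\<Sum>k. h (k + T)\<bar> \<le> 2 * 2 * (1 / real (Lv r T))"
    using tail_bound[of "\<lambda>l. 1 / real (Lv r l)" 2 h] inv_tail[OF r0] hb by auto
  have ai: "al r S i = suminf h" using ir unfolding al_def h_def by simp
  have ht1: "h (t+1) = 0" unfolding h_def dig_def i_def by auto
  have sh: "summable (\<lambda>k. h (k + (t+1)))" using tb(1) by (subst summable_iff_shift)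
  have h1: "(\<Sum>k. h (k + (t+1))) = (\<Sum>k. h (k + (t+2)))"
  proof -
    have "(\<Sum>k. h (Suc k + (t+1))) = (\<Sum>k. h (k + (t+1))) - h (0 + (t+1))"
      by (rule suminf_split_head[OF sh])
    moreover have "(\<lambda>k. h (Suc k + (t+1))) = (\<lambda>k. h (k + (t+2)))" by (simp add: numeral_2_eq_2)
    ultimately show ?thesis using ht1 by simp
  qed
  have sp: "suminf h = (\<Sum>k. h (k + (t+1))) + (\<Sum>l<t+1. h l)"
    by (rule suminf_split_initial_segment[OF tb(1)])
  define P where "P = (\<Sum>l<t+1. dig r S i l * (Lv r t div Lv r l))"
  have Lt: "0 < real (Lv r t)" using Lv_pos[OF r0] by simp
  have Pe: "real P = real (Lv r t) * (\<Sum>l<t+1. h l)"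
  proof -
    have "real (dig r S i l * (Lv r t div Lv r l)) = real (Lv r t) * h l" if "l < t+1" for l
    proof -
      have d: "Lv r l dvd Lv r t" using that by (intro Lv_dvd[OF r0]) auto
      have "real (Lv r t div Lv r l) = real (Lv r t) / real (Lv r l)"
        using d by (simp add: real_of_nat_div)
      then show ?thesis unfolding h_def by simp
    qed
    then have "real P = (\<Sum>l<t+1. real (Lv r t) * h l)" unfolding P_def of_nat_sum
      by (intro sum.cong) auto
    then show ?thesis by (simp only: sum_distrib_left)
  qed
  have Ple: "P \<le> Lv r t"
  proof -
    have "(\<Sum>l<t+1. h l) \<le> suminf h" using tb(1) h0 by (intro sum_le_suminf) auto
    also have "\<dots> \<le> 2 * 2 * (1 / real (Lv r 0))" using tb(2)[of 0] by simp
    also have "\<dots> \<le> 1"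
    proof -
      have "(4::nat) \<le> Lv r 0"
      proof -
        have "(4::nat) = 2^2" by simp
        also have "\<dots> \<le> 2^(8*r)" using r by (intro power_increasing) auto
        finally show ?thesis by (simp add: Lv.simps)
      qed
      then have "4 \<le> real (Lv r 0)" by linarith
      then show ?thesis by (simp add: field_simps)
    qed
    finally have "(\<Sum>l<t+1. h l) \<le> 1" .
    then have "real P \<le> real (Lv r t) * 1" unfolding Pe using Lt by (intro mult_left_mono) auto
    then show ?thesis by simp
  qed
  define lam where "lam j = (if j = 0 then - int P else if j = i then int (Lv r t) else 0)" for j
  have "lam \<in> intvec r" unfolding intvec_def lam_def using ir by auto
  moreover have "lam \<noteq> (\<lambda>_. 0)"
  proof
    assume "lam = (\<lambda>_. 0)"
    then have "lam i = 0" by simp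
    then show False unfolding lam_def using ir Lv_pos[OF r0, of t] by auto
  qed
  moreover have "maxnorm r lam \<le> int (Lv r t)"
    unfolding maxnorm_def
  proof (subst Max_le_iff)
    show "\<forall>a\<in>(\<lambda>j. \<bar>lam j\<bar>) ` {0..r}. a \<le> int (Lv r t)"
      unfolding lam_def using Ple by auto
  qed auto
  moreover have "zeta r (al r S) lam \<le> 4 * real (Lv r t) / real (Lv r (t+2))"
  proof -
    have s: "(\<Sum>j=1..r. real_of_int (lam j) * al r S j) = real (Lv r t) * al r S i"
    proof -
      have "(\<Sum>j=1..r. real_of_int (lam j) * al r S j) = (\<Sum>j\<in>{1..r}. if j = i then real (Lv r t) * al r S j else 0)"
        unfolding lam_def by (intro sum.cong) auto
      also have "\<dots> = real (Lv r t) * al r S i" using ir by (simp add: sum.delta')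
      finally show ?thesis .
    qed
    have "zeta r (al r S) lam = \<bar>- real P + real (Lv r t) * al r S i\<bar>"
      unfolding zeta_def s by (simp add: lam_def)
    also have "- real P + real (Lv r t) * al r S i = real (Lv r t) * (\<Sum>k. h (k + (t+2)))"
      unfolding Pe ai using sp h1 by (simp add: algebra_simps)
    also have "\<bar>real (Lv r t) * (\<Sum>k. h (k + (t+2)))\<bar> = real (Lv r t) * \<bar>\<Sum>k. h (k + (t+2))\<bar>"
      by (simp add: abs_mult)
    also have "\<dots> \<le> real (Lv r t) * (2 * 2 * (1 / real (Lv r (t+2))))"
      using tb(2)[of "t+2"] Lt by (intro mult_left_mono) auto
    also have "\<dots> = 4 * real (Lv r t) / real (Lv r (t+2))" by simp
    finally show ?thesis .
  qed
  ultimately show ?thesis by blast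
qed

lemma Lf_nonzero:
  assumes r: "3 \<le> r" and nz: "\<exists>i\<le>r. m i \<noteq> 0"
  shows "Lf r S m \<noteq> 0"
proof -
  have r0: "0 < r" using r by simp
  define B where "B = (\<Sum>j\<le>r. \<bar>m j\<bar>)"
  have mB: "\<bar>m j\<bar> \<le> B" if "j \<le> r" for j
    unfolding B_def using that by (intro member_le_sum) auto
  define n where "n = nat B"
  have bnd: "\<bar>m j\<bar> \<le> int (Lv r (t+1))" if "n \<le> t" "j \<in> {1..r}" for t j
  proof -
    have "\<bar>m j\<bar> \<le> B" using mB that(2) by auto
    also have "B \<le> int n" unfolding n_def by simp
    also have "int n \<le> int t" using that(1) by simp
    also have "int t \<le> int (Lv r t)" using Lv_gt[OF r0, of t] by simp
    also have "int (Lv r t) \<le> int (Lv r (t+1))" using Lv_mono[OF r0, of t "t+1"] by simp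
    finally show ?thesis .
  qed
  show ?thesis
  proof (cases "\<exists>j\<in>{3..r}. m j \<noteq> 0")
    case True
    have X: "\<And>j. j \<in> {1..r} \<Longrightarrow> \<bar>m j\<bar> \<le> int (Lv r (n+1))" using bnd by simp
    have "4 * real (Lv r n) / real (Lv r (n+2)) < \<bar>Lf r S m\<bar>" using KL_off[where m=m and S=S, OF r X True] .
    moreover have "0 \<le> 4 * real (Lv r n) / real (Lv r (n+2))" by simp
    ultimately show ?thesis by linarith
  next
    case False
    then have z: "\<And>j. j \<in> {3..r} \<Longrightarrow> m j = 0" by blast
    show ?thesis
    proof (cases "m 1 \<noteq> 0")
      case True
      have "m (if even (2*n+1) then 2 else 1) \<noteq> 0" using True by simp
      have X: "\<And>j. j \<in> {1..r} \<Longrightarrow> \<bar>m j\<bar> \<le> int (Lv r (2*n+1+1))" using bnd by simp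
      show ?thesis using KL_on[where m=m and S=S, OF r X z \<open>m (if even (2*n+1) then 2 else 1) \<noteq> 0\<close>] .
    next
      case F1: False
      show ?thesis
      proof (cases "m 2 \<noteq> 0")
        case True
        have "m (if even (2*n) then 2 else 1) \<noteq> 0" using True by simp
        have X: "\<And>j. j \<in> {1..r} \<Longrightarrow> \<bar>m j\<bar> \<le> int (Lv r (2*n+1))" using bnd by simp
        show ?thesis using KL_on[where m=m and S=S, OF r X z \<open>m (if even (2*n) then 2 else 1) \<noteq> 0\<close>] .
      next
        case F2: False
        have all0: "m j = 0" if "j \<in> {1..r}" for j
        proof (cases "j \<ge> 3")
          case True then show ?thesis using z that by auto
        next
          case False
          then have "j = 1 \<or> j = 2" using that by auto
          then show ?thesis using F1 F2 by auto
        qed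
        then have "m 0 \<noteq> 0" using nz by (metis atLeastAtMost_iff le_0_eq not_less_eq_eq One_nat_def Suc_leI neq0_conv)
        moreover have "Lf r S m = real_of_int (m 0)" unfolding Lf_def using all0 by simp
        ultimately show ?thesis by simp
      qed
    qed
  qed
qed

lemma common_den:
  fixes q :: "nat \<Rightarrow> real"
  shows "(\<forall>i\<le>n. q i \<in> \<rat>) \<Longrightarrow> \<exists>d::int. 0 < d \<and> (\<forall>i\<le>n. real_of_int d * q i \<in> \<int>)"
proof (induction n)
  case 0
  then have "q 0 \<in> \<rat>" by simp
  then obtain a b where ab: "0 < b" "q 0 = of_int a / of_int b" by (rule Rats_cases')
  then have "real_of_int b * q 0 = of_int a" by simp
  then show ?case using ab by (intro exI[of _ b]) auto
next
  case (Suc n)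
  then obtain d where d: "0 < d" "\<forall>i\<le>n. real_of_int d * q i \<in> \<int>" by auto
  have "q (Suc n) \<in> \<rat>" using Suc.prems by simp
  then obtain a b where ab: "0 < b" "q (Suc n) = of_int a / of_int b" by (rule Rats_cases')
  have "real_of_int (d*b) * q i \<in> \<int>" if "i \<le> Suc n" for i
  proof (cases "i = Suc n")
    case True
    then have "real_of_int (d*b) * q i = of_int (d * a)" using ab by simp
    then show ?thesis by (metis Ints_of_int)
  next
    case False
    then have "i \<le> n" using that by simp
    then have "real_of_int d * q i \<in> \<int>" using d by simp
    then have "real_of_int b * (real_of_int d * q i) \<in> \<int>" by (rule Ints_mult[OF Ints_of_int])
    then show ?thesis by (simp add: algebra_simps)
  qed
  then show ?case using d ab by (intro exI[of _ "d*b"]) auto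
qed

lemma QLI: assumes r: "3 \<le> r" shows "Q_lin_indep r (al r S)"
  unfolding Q_lin_indep_def
proof (rule allI, rule impI)
  fix q :: "nat \<Rightarrow> real"
  assume a: "(\<forall>i\<le>r. q i \<in> \<rat>) \<and> q 0 + (\<Sum>i=1..r. q i * al r S i) = 0"
  obtain d :: int where d: "0 < d" "\<forall>i\<le>r. real_of_int d * q i \<in> \<int>"
    using common_den[of r q] a by auto
  define m where "m i = (if i \<le> r then \<lfloor>real_of_int d * q i\<rfloor> else 0)" for i
  have me: "real_of_int (m i) = real_of_int d * q i" if "i \<le> r" for i
    unfolding m_def using that d(2) by (simp add: Ints_cases floor_of_int)
  have "Lf r S m = real_of_int d * (q 0 + (\<Sum>i=1..r. q i * al r S i))"
    unfolding Lf_def using me by (simp add: sum_distrib_left algebra_simps)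
  then have "Lf r S m = 0" using a by simp
  then have "\<not> (\<exists>i\<le>r. m i \<noteq> 0)" using Lf_nonzero[OF r] by blast
  then show "\<forall>i\<le>r. q i = 0" using me d(1) by (metis mult_eq_0_iff of_int_0 of_int_eq_0_iff less_irrefl)
qed

lemma zeta_Lf: "zeta r (al r S) m = \<bar>Lf r S m\<bar>"
  unfolding zeta_def Lf_def by simp

lemma best_in:
  assumes r: "3 \<le> r" and ba: "best_approx r (al r S) m" and N: "int (Lv r 0) \<le> maxnorm r m"
  shows "\<forall>j\<ge>3. m j = 0"
proof (rule ccontr)
  assume "\<not> (\<forall>j\<ge>3. m j = 0)"
  then obtain j0 where j0: "3 \<le> j0" "m j0 \<noteq> 0" by auto
  have r0: "0 < r" using r by simp
  have mi: "m \<in> intvec r" using ba unfolding best_approx_def by simp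
  have "j0 \<le> r"
  proof (rule ccontr)
    assume "\<not> j0 \<le> r"
    then have "m j0 = 0" using mi unfolding intvec_def by auto
    then show False using j0 by simp
  qed
  then have nz: "\<exists>j\<in>{3..r}. m j \<noteq> 0" using j0 by auto
  define M where "M = maxnorm r m"
  have mle: "\<bar>m j\<bar> \<le> M" if "j \<le> r" for j
    unfolding M_def maxnorm_def using that by (intro Max_ge) auto
  define P where "P n = (M < int (Lv r n))" for n
  have exP: "P (nat M)" unfolding P_def using Lv_gt[OF r0, of "nat M"] by linarith
  define n0 where "n0 = (LEAST n. P n)"
  have Pn0: "P n0" unfolding n0_def using exP by (rule LeastI)
  have n00: "n0 \<noteq> 0"
  proof
    assume "n0 = 0"
    then show False using Pn0 N unfolding P_def M_def by simp
  qed
  define t where "t = n0 - 1"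
  have tn: "t + 1 = n0" unfolding t_def using n00 by simp
  have nPt: "\<not> P t" unfolding n0_def t_def using n00 by (intro not_less_Least) (auto simp: n0_def[symmetric])
  have Lt: "int (Lv r t) \<le> M" using nPt unfolding P_def by simp
  have Lt1: "M < int (Lv r (t+1))" using Pn0 tn unfolding P_def by simp
  have X: "\<And>j. j \<in> {1..r} \<Longrightarrow> \<bar>m j\<bar> \<le> int (Lv r (t+1))" using mle Lt1 by fastforce
  have off: "4 * real (Lv r t) / real (Lv r (t+2)) < \<bar>Lf r S m\<bar>"
    using KL_off[where m=m and S=S, OF r X nz] .
  obtain lam where lam: "lam \<in> intvec r" "lam \<noteq> (\<lambda>_. 0)" "maxnorm r lam \<le> int (Lv r t)"
    "zeta r (al r S) lam \<le> 4 * real (Lv r t) / real (Lv r (t+2))"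
    using lam_vec[OF r, of t S] by blast
  have "zeta r (al r S) m \<le> zeta r (al r S) lam"
    using ba lam(1,2,3) Lt unfolding best_approx_def M_def by auto
  then show False using off lam(4) unfolding zeta_Lf by linarith
qed

lemma cantor_nat_set: "uncountable (UNIV :: nat set set)"
proof
  assume "countable (UNIV :: nat set set)"
  then have f: "range (from_nat_into (UNIV :: nat set set)) = UNIV"
    by (intro range_from_nat_into) auto
  define f where "f = from_nat_into (UNIV :: nat set set)"
  have f: "range f = UNIV" using f unfolding f_def .
  then obtain k where "f k = {n. n \<notin> f n}" by (metis UNIV_I imageE)
  then show False by blast
qed

lemma al_inj: assumes r: "3 \<le> r" shows "inj (al r)"
proof (rule injI)
  fix S S' assume eq: "al r S = al r S'"
  show "S = S'"
  proof (rule ccontr)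
    assume ne: "S \<noteq> S'"
    have r0: "0 < r" using r by simp
    define D where "D = {n. (n \<in> S) \<noteq> (n \<in> S')}"
    have "D \<noteq> {}" using ne unfolding D_def by auto
    then obtain n1 where "n1 \<in> D" by auto
    define n0 where "n0 = (LEAST n. n \<in> D)"
    have n0D: "n0 \<in> D" unfolding n0_def using \<open>n1 \<in> D\<close> by (rule LeastI)
    have bel: "n \<notin> D" if "n < n0" for n using that not_less_Least unfolding n0_def by blast
    define l0 where "l0 = 2 * n0 + 1"
    define dl where "dl l = real (dig r S 1 l) / real (Lv r l) - real (dig r S' 1 l) / real (Lv r l)" for l
    have dl_eq: "dl l = (real (dig r S 1 l) - real (dig r S' 1 l)) / real (Lv r l)" for l
      unfolding dl_def by (simp add: diff_divide_distrib)
    have small: "\<bar>real (dig r S 1 l) - real (dig r S' 1 l)\<bar> \<le> 1" for l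
      unfolding dig_def by auto
    have dlb: "\<bar>dl l\<bar> \<le> 1 * (1 / real (Lv r l))" for l
    proof -
      have p: "0 < real (Lv r l)" using Lv_pos[OF r0] by simp
      have "\<bar>dl l\<bar> = \<bar>real (dig r S 1 l) - real (dig r S' 1 l)\<bar> / real (Lv r l)"
        unfolding dl_eq using p by (simp add: abs_divide)
      also have "\<dots> \<le> 1 / real (Lv r l)" using small p by (intro divide_right_mono) auto
      finally show ?thesis by simp
    qed
    have tb: "summable dl" "\<And>T. \<bar>\<Sum>k. dl (k + T)\<bar> \<le> 2 * 1 * (1 / real (Lv r T))"
      using tail_bound[of "\<lambda>l. 1 / real (Lv r l)" 1 dl] inv_tail[OF r0] dlb by auto
    have s0: "suminf dl = 0"
    proof -
      have "dl sums (al r S 1 - al r S' 1)"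
        unfolding dl_def using dig_sums[OF r0, of 1 S] dig_sums[OF r0, of 1 S'] r
        by (intro sums_diff) auto
      then show ?thesis using eq by (simp add: sums_unique[symmetric])
    qed
    have z: "dl l = 0" if "l < l0" for l
    proof (cases "odd l")
      case True
      then obtain k where k: "l = 2*k+1" by (rule oddE)
      then have "l div 2 < n0" using that unfolding l0_def by auto
      then have "l div 2 \<notin> D" by (rule bel)
      then show ?thesis unfolding dl_def dig_def D_def using True by auto
    next
      case False then show ?thesis unfolding dl_def dig_def by auto
    qed
    have dl0: "\<bar>dl l0\<bar> = 1 / real (Lv r l0)"
    proof -
      have "odd l0" "l0 div 2 = n0" unfolding l0_def by auto
      then have "\<bar>real (dig r S 1 l0) - real (dig r S' 1 l0)\<bar> = 1"
        using n0D unfolding dig_def D_def by auto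
      then show ?thesis unfolding dl_eq using Lv_pos[OF r0, of l0] by (simp add: abs_divide)
    qed
    have sp: "suminf dl = (\<Sum>k. dl (k + l0)) + (\<Sum>l<l0. dl l)"
      by (rule suminf_split_initial_segment[OF tb(1)])
    have "(\<Sum>l<l0. dl l) = 0" using z by simp
    have sh: "summable (\<lambda>k. dl (k + l0))" using tb(1) by (subst summable_iff_shift)
    have h: "(\<Sum>k. dl (k + l0)) = dl l0 + (\<Sum>k. dl (k + Suc l0))"
    proof -
      have "(\<Sum>k. dl (Suc k + l0)) = (\<Sum>k. dl (k + l0)) - dl (0 + l0)"
        by (rule suminf_split_head[OF sh])
      then show ?thesis by simp
    qed
    have tl: "\<bar>\<Sum>k. dl (k + Suc l0)\<bar> \<le> 2 / real (Lv r (Suc l0))" using tb(2)[of "Suc l0"] by simp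
    have L4: "4 * real (Lv r l0) \<le> real (Lv r (Suc l0))"
      using Lv_Suc_ge4[OF r0, of l0] by linarith
    have p: "0 < real (Lv r l0)" using Lv_pos[OF r0] by simp
    have "2 / real (Lv r (Suc l0)) \<le> 2 / (4 * real (Lv r l0))"
      using L4 p by (intro divide_left_mono) auto
    also have "\<dots> < 1 / real (Lv r l0)" using p by (simp add: field_simps)
    finally have "\<bar>\<Sum>k. dl (k + Suc l0)\<bar> < \<bar>dl l0\<bar>" using tl dl0 by linarith
    moreover have "dl l0 + (\<Sum>k. dl (k + Suc l0)) = 0"
      using s0 sp h \<open>(\<Sum>l<l0. dl l) = 0\<close> by simp
    ultimately show False by linarith
  qed
qed

theorem theorem1p3:
  fixes r :: nat
  assumes "r \<ge> 3"
  shows "\<exists>A \<subseteq> realtuple r. uncountable A \<and>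
    (\<forall>\<alpha>\<in>A. Q_lin_indep r \<alpha> \<and>
       (\<exists>b. sublattice3_basis r b \<and>
          (\<exists>N. \<forall>m. best_approx r \<alpha> m \<and> maxnorm r m \<ge> N \<longrightarrow> m \<in> lattice_span b)))"
proof (intro exI conjI)
  have r: "3 \<le> r" using assms .
  show "range (al r) \<subseteq> realtuple r" unfolding realtuple_def al_def by auto
  show "uncountable (range (al r))"
  proof
    assume "countable (range (al r))"
    then have "countable (UNIV :: nat set set)"
      using countable_image_inj_on al_inj[OF r] by blast
    then show False using cantor_nat_set by simp
  qed
  define b :: "nat \<Rightarrow> nat \<Rightarrow> int" where "b k j = (if j = k then 1 else 0)" for k j
  have sb: "sublattice3_basis r b"
    unfolding sublattice3_basis_def
  proof (intro conjI allI impI)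
    fix k :: nat assume "k < 3"
    then show "b k \<in> intvec r" unfolding intvec_def b_def using r by auto
  next
    fix c :: "nat \<Rightarrow> int" and k :: nat
    assume h: "\<forall>j. (\<Sum>k<3. c k * b k j) = 0" and k: "k < 3"
    have e: "{..<3::nat} = {0,1,2}" by auto
    have "k = 0 \<or> k = 1 \<or> k = 2" using k by auto
    then have "(\<Sum>k'<3. c k' * b k' k) = c k" unfolding b_def e by auto
    then show "c k = 0" using h by simp
  qed
  have ls: "m \<in> lattice_span b" if "\<forall>j\<ge>3. m j = 0" for m
    unfolding lattice_span_def
  proof (intro CollectI exI[of _ m] ext)
    fix j
    show "m j = (\<Sum>k<3. m k * b k j)"
    proof (cases "j < 3")
      case True
      have e: "{..<3::nat} = {0,1,2}" by auto
      have "j = 0 \<or> j = 1 \<or> j = 2" using True by auto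
      then show ?thesis unfolding b_def e by auto
    next
      case False then show ?thesis unfolding b_def using that by simp
    qed
  qed
  show "\<forall>\<alpha>\<in>range (al r). Q_lin_indep r \<alpha> \<and>
       (\<exists>b. sublattice3_basis r b \<and>
          (\<exists>N. \<forall>m. best_approx r \<alpha> m \<and> maxnorm r m \<ge> N \<longrightarrow> m \<in> lattice_span b))"
  proof
    fix \<alpha> assume "\<alpha> \<in> range (al r)"
    then obtain S where S: "\<alpha> = al r S" by auto
    show "Q_lin_indep r \<alpha> \<and>
       (\<exists>b. sublattice3_basis r b \<and>
          (\<exists>N. \<forall>m. best_approx r \<alpha> m \<and> maxnorm r m \<ge> N \<longrightarrow> m \<in> lattice_span b))"
      unfolding S
    proof (intro conjI exI allI impI)
      show "Q_lin_indep r (al r S)" by (rule QLI[OF r])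
      show "sublattice3_basis r b" by (rule sb)
      fix m assume "best_approx r (al r S) m \<and> int (Lv r 0) \<le> maxnorm r m"
      then show "m \<in> lattice_span b" using best_in[OF r] ls by blast
    qed
  qed
qed

end
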